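(* Let $f\in A[X]$ be monic with discriminant $\Delta=\mathrm{Res}_X(f,f')\neq 0$, $r=v(\Delta)$, and let $N>2r$ be an integer. Then the number of roots in $A/\pi^NA$ of the reduction $f_N$ of $f$ modulo $\pi^N$ is at most $q^{r+\lfloor r/2\rfloor+1}$.
   Context: $K$ is a field complete with respect to a non-archimedean discrete valuation $v$, normalized by $v(\pi)=1$ for a uniformizer $\pi$ of the valuation ring $A=\{x\in K: v(x)\geq 0\}$; the residue field $A/\pi A$ is finite with $q$ elements. *)

theory Defs
  imports "HOL-Computational_Algebra.Polynomial" "Subresultants.Resultant_Prelim"
begin

text \<open>A discrete valuation on a field, with values in the integers; the value of 0
  (formally infinity) is never used: all axioms are stated for nonzero elements.\<close>
definition discrete_valuation :: "('a::field \<Rightarrow> int) \<Rightarrow> bool" where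
  "discrete_valuation v \<longleftrightarrow>
     (\<forall>x y. x \<noteq> 0 \<longrightarrow> y \<noteq> 0 \<longrightarrow> v (x * y) = v x + v y) \<and>
     (\<forall>x y. x \<noteq> 0 \<longrightarrow> y \<noteq> 0 \<longrightarrow> x + y \<noteq> 0 \<longrightarrow> v (x + y) \<ge> min (v x) (v y))"

text \<open>x is v-adically small of order n: v(x) >= n (with v(0) = infinity).\<close>
definition vge :: "('a::field \<Rightarrow> int) \<Rightarrow> 'a \<Rightarrow> int \<Rightarrow> bool" where
  "vge v x n \<longleftrightarrow> x = 0 \<or> v x \<ge> n"

definition v_complete :: "('a::field \<Rightarrow> int) \<Rightarrow> bool" where
  "v_complete v \<longleftrightarrow>
     (\<forall>s :: nat \<Rightarrow> 'a.
        (\<forall>n. \<exists>M. \<forall>i\<ge>M. \<forall>j\<ge>M. vge v (s i - s j) n) \<longrightarrow>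
        (\<exists>L. \<forall>n. \<exists>M. \<forall>i\<ge>M. vge v (s i - L) n))"

definition val_ring :: "('a::field \<Rightarrow> int) \<Rightarrow> 'a set" where
  "val_ring v = {x. vge v x 0}"

definition cong_rel :: "('a::field \<Rightarrow> int) \<Rightarrow> 'a \<Rightarrow> nat \<Rightarrow> ('a \<times> 'a) set" where
  "cong_rel v \<pi> N = {(x, y). x \<in> val_ring v \<and> y \<in> val_ring v \<and>
                       (\<exists>a \<in> val_ring v. x - y = \<pi> ^ N * a)}"

definition quot_ring :: "('a::field \<Rightarrow> int) \<Rightarrow> 'a \<Rightarrow> nat \<Rightarrow> 'a set set" where
  "quot_ring v \<pi> N = val_ring v // cong_rel v \<pi> N"

definition roots_mod :: "('a::field \<Rightarrow> int) \<Rightarrow> 'a \<Rightarrow> nat \<Rightarrow> 'a poly \<Rightarrow> 'a set set" where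
  "roots_mod v \<pi> N f = {C \<in> quot_ring v \<pi> N.
      \<exists>a \<in> C. \<exists>b \<in> val_ring v. poly f a = \<pi> ^ N * b}"

end

theory Submission
  imports Defs
begin


locale dval =
  fixes v :: "'a::field \<Rightarrow> int" and \<pi> :: 'a
  assumes dv: "discrete_valuation v"
    and pi0: "\<pi> \<noteq> 0" and vpi: "v \<pi> = 1"
begin

abbreviation "A \<equiv> val_ring v"

lemma vmult: "x \<noteq> 0 \<Longrightarrow> y \<noteq> 0 \<Longrightarrow> v (x * y) = v x + v y"
  using dv unfolding discrete_valuation_def by blast

lemma vadd: "x \<noteq> 0 \<Longrightarrow> y \<noteq> 0 \<Longrightarrow> x + y \<noteq> 0 \<Longrightarrow> v (x + y) \<ge> min (v x) (v y)"
  using dv unfolding discrete_valuation_def by blast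

lemma v1: "v 1 = 0"
  using vmult[of 1 1] by simp

lemma vminus1: "v (-1) = 0"
proof -
  have "v ((-1) * (-1)) = v (-1) + v (-1)" by (rule vmult) auto
  then show ?thesis using v1 by simp
qed

lemma vuminus: "x \<noteq> 0 \<Longrightarrow> v (- x) = v x"
  using vmult[of "-1" x] vminus1 by simp

lemma vinv: "x \<noteq> 0 \<Longrightarrow> v (inverse x) = - v x"
  using vmult[of x "inverse x"] v1 by simp

lemma vdiv: "x \<noteq> 0 \<Longrightarrow> y \<noteq> 0 \<Longrightarrow> v (x / y) = v x - v y"
  using vmult[of x "inverse y"] vinv[of y] by (simp add: divide_inverse)

lemma vpow: "x \<noteq> 0 \<Longrightarrow> v (x ^ k) = int k * v x"
  by (induction k) (auto simp: v1 vmult algebra_simps)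

lemma vpi_pow: "v (\<pi> ^ k) = int k"
  using vpow[OF pi0] vpi by simp

lemma vge_0[simp]: "vge v 0 m" unfolding vge_def by simp

lemma vge_mono: "vge v x m \<Longrightarrow> m' \<le> m \<Longrightarrow> vge v x m'"
  unfolding vge_def by auto

lemma vge_add: assumes "vge v x m" "vge v y m" shows "vge v (x + y) m"
proof -
  { assume "x \<noteq> 0" "y \<noteq> 0" "x + y \<noteq> 0"
    then have "v (x+y) \<ge> min (v x) (v y)" by (rule vadd)
    with assms \<open>x \<noteq> 0\<close> \<open>y \<noteq> 0\<close> have ?thesis unfolding vge_def by auto }
  then show ?thesis using assms unfolding vge_def by (cases "x = 0"; cases "y = 0"; auto)
qed

lemma vge_uminus: "vge v x m \<Longrightarrow> vge v (- x) m"
  unfolding vge_def using vuminus by (cases "x = 0") auto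

lemma vge_diff: "vge v x m \<Longrightarrow> vge v y m \<Longrightarrow> vge v (x - y) m"
  using vge_add[of x m "-y"] vge_uminus[of y m] by simp

lemma vge_mult: "vge v x m \<Longrightarrow> vge v y n \<Longrightarrow> vge v (x * y) (m + n)"
  unfolding vge_def using vmult by (cases "x = 0"; cases "y = 0") auto

lemma vge_multA: "vge v x m \<Longrightarrow> y \<in> A \<Longrightarrow> vge v (x * y) m"
  using vge_mult[of x m y 0] unfolding val_ring_def by simp

lemma vge_multA': "vge v x m \<Longrightarrow> y \<in> A \<Longrightarrow> vge v (y * x) m"
  using vge_multA by (simp add: mult.commute)

lemma A_0[simp]: "0 \<in> A" and A_1[simp]: "1 \<in> A"
  unfolding val_ring_def vge_def using v1 by auto

lemma A_add: "x \<in> A \<Longrightarrow> y \<in> A \<Longrightarrow> x + y \<in> A"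
  unfolding val_ring_def using vge_add by auto
lemma A_uminus: "x \<in> A \<Longrightarrow> - x \<in> A"
  unfolding val_ring_def using vge_uminus by auto
lemma A_diff: "x \<in> A \<Longrightarrow> y \<in> A \<Longrightarrow> x - y \<in> A"
  unfolding val_ring_def using vge_diff by auto
lemma A_mult: "x \<in> A \<Longrightarrow> y \<in> A \<Longrightarrow> x * y \<in> A"
  unfolding val_ring_def using vge_mult[of x 0 y 0] by auto
lemma A_pow: "x \<in> A \<Longrightarrow> x ^ k \<in> A"
  by (induction k) (auto intro: A_mult)
lemma A_pi: "\<pi> \<in> A" unfolding val_ring_def vge_def using vpi by auto
lemma A_of_nat: "of_nat n \<in> A"
  by (induction n) (auto intro: A_add)
lemma A_of_int: "of_int n \<in> A"
proof (cases n)
  case (nonneg k) then show ?thesis using A_of_nat by simp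
next
  case (neg k) then show ?thesis using A_uminus[OF A_of_nat[of "Suc k"]] by simp
qed

lemma A_sum: "(\<And>x. x \<in> S \<Longrightarrow> g x \<in> A) \<Longrightarrow> sum g S \<in> A"
  by (induction S rule: infinite_finite_induct) (auto intro: A_add)
lemma A_prod: "(\<And>x. x \<in> S \<Longrightarrow> g x \<in> A) \<Longrightarrow> prod g S \<in> A"
  by (induction S rule: infinite_finite_induct) (auto intro: A_mult)

lemma vge_sum: "(\<And>x. x \<in> S \<Longrightarrow> vge v (g x) m) \<Longrightarrow> vge v (sum g S) m"
  by (induction S rule: infinite_finite_induct) (auto intro: vge_add)

lemma vge_of_nat_A: "vge v x m \<Longrightarrow> x \<in> A \<or> m \<ge> 0 \<Longrightarrow> True" by simp

lemma pi_pow_iff: "(\<exists>t\<in>A. w = \<pi> ^ k * t) \<longleftrightarrow> vge v w (int k)"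
proof
  assume "\<exists>t\<in>A. w = \<pi> ^ k * t"
  then obtain t where t: "t \<in> A" "w = \<pi> ^ k * t" by auto
  have "vge v (\<pi> ^ k) (int k)" unfolding vge_def using vpi_pow by simp
  from vge_multA[OF this t(1)] t(2) show "vge v w (int k)" by simp
next
  assume h: "vge v w (int k)"
  have pk: "\<pi> ^ k \<noteq> 0" using pi0 by simp
  show "\<exists>t\<in>A. w = \<pi> ^ k * t"
  proof (cases "w = 0")
    case True then show ?thesis by (intro bexI[of _ 0]) auto
  next
    case False
    then have "v (w / \<pi> ^ k) = v w - int k" using vdiv[OF False pk] vpi_pow by simp
    then have "w / \<pi> ^ k \<in> A" using h False unfolding vge_def val_ring_def by auto
    then show ?thesis using pk by (intro bexI[of _ "w / \<pi> ^ k"]) auto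
  qed
qed

lemma v_perturb:
  assumes x: "x \<noteq> 0" and m: "v x < m" and d: "vge v (y - x) m"
  shows "y \<noteq> 0 \<and> v y = v x"
proof -
  have y0: "y \<noteq> 0"
  proof
    assume "y = 0"
    then have "vge v (- x) m" using d by simp
    then show False using x m vuminus[OF x] unfolding vge_def by auto
  qed
  have 1: "v y \<ge> v x"
  proof (cases "y - x = 0")
    case True then show ?thesis by simp
  next
    case False
    have "v (x + (y - x)) \<ge> min (v x) (v (y - x))" by (rule vadd) (use x False y0 in auto)
    then show ?thesis using d False m unfolding vge_def by auto
  qed
  have 2: "v x \<ge> v y"
  proof (cases "y - x = 0")
    case True then show ?thesis by simp
  next
    case False
    have "v (y + (- (y - x))) \<ge> min (v y) (v (- (y - x)))" by (rule vadd) (use x False y0 in auto)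
    then have "v x \<ge> min (v y) (v (y - x))" using vuminus[OF False] by simp
    then show ?thesis using d False m unfolding vge_def by auto
  qed
  from y0 1 2 show ?thesis by auto
qed

lemma vge_v: "x \<noteq> 0 \<Longrightarrow> vge v x m \<longleftrightarrow> v x \<ge> m" unfolding vge_def by auto

lemma A_nonneg: "x \<in> A \<Longrightarrow> x \<noteq> 0 \<Longrightarrow> v x \<ge> 0" unfolding val_ring_def vge_def by auto

end

context dval begin

definition "polyA f \<longleftrightarrow> (\<forall>i. coeff f i \<in> A)"

lemma polyA_pCons: "polyA (pCons c g) \<longleftrightarrow> c \<in> A \<and> polyA g"
  unfolding polyA_def
proof (intro iffI conjI allI)
  assume h: "\<forall>i. coeff (pCons c g) i \<in> A"
  show "c \<in> A" using h[rule_format, of 0] by simp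
  fix i show "coeff g i \<in> A" using h[rule_format, of "Suc i"] by simp
next
  fix i assume "c \<in> A \<and> (\<forall>i. coeff g i \<in> A)"
  then show "coeff (pCons c g) i \<in> A" by (cases i) auto
qed

lemma poly_A: "polyA f \<Longrightarrow> x \<in> A \<Longrightarrow> poly f x \<in> A"
  by (induction f rule: pCons_induct) (auto simp: polyA_pCons intro!: A_add A_mult)

lemma pderiv_A: "polyA f \<Longrightarrow> polyA (pderiv f)"
  unfolding polyA_def coeff_pderiv using A_mult A_of_nat by blast

lemma taylor:
  assumes "polyA f" "x \<in> A" "t \<in> A"
  shows "\<exists>H\<in>A. poly f (x + t) = poly f x + t * poly (pderiv f) x + t^2 * H"
  using assms(1)
proof (induction f rule: pCons_induct)
  case 0 then show ?case by (intro bexI[of _ 0]) auto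
next
  case (pCons c g)
  then have g: "polyA g" and c: "c \<in> A" by (auto simp: polyA_pCons)
  from pCons.IH[OF g] obtain H where H: "H \<in> A"
    "poly g (x + t) = poly g x + t * poly (pderiv g) x + t^2 * H" by auto
  have g'A: "poly (pderiv g) x \<in> A" using poly_A[OF pderiv_A[OF g] assms(2)] .
  show ?case
  proof (intro bexI[of _ "x * H + poly (pderiv g) x + t * H"])
    show "x * H + poly (pderiv g) x + t * H \<in> A"
      using H g'A assms by (intro A_add A_mult) auto
    show "poly (pCons c g) (x + t) = poly (pCons c g) x + t * poly (pderiv (pCons c g)) x +
      t\<^sup>2 * (x * H + poly (pderiv g) x + t * H)"
    proof -
      have "poly (pCons c g) (x + t) = c + (x + t) * poly g (x + t)" by simp
      also have "\<dots> = c + (x + t) * (poly g x + t * poly (pderiv g) x + t^2 * H)" by (simp only: H(2))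
      finally show ?thesis by (simp add: pderiv_pCons power2_eq_square algebra_simps)
    qed
  qed
qed

lemma polyA_diff: "polyA f \<Longrightarrow> polyA g \<Longrightarrow> polyA (f - g)"
  unfolding polyA_def by (auto intro: A_diff)

end


lemma sylv_row_sum:
  fixes F G :: "'a::comm_ring_1 poly"
  assumes i: "i < degree F + degree G"
  shows "(\<Sum>j\<in>{0..<degree F + degree G}. sylvester_mat F G $$ (i,j) * z ^ (degree F + degree G - 1 - j))
    = (if i < degree G then z^(degree G - 1 - i) * poly F z
       else z^(degree F + degree G - 1 - i) * poly G z)"
proof -
  define m where "m = degree F"
  define n where "n = degree G"
  have i': "i < m + n" using i m_def n_def by simp
  have idx: "\<And>j. j < m + n \<Longrightarrow> sylvester_mat F G $$ (i,j) =
    (if i < n then if i \<le> j \<and> j - i \<le> m then coeff F (m + i - j) else 0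
     else if i - n \<le> j \<and> j \<le> i then coeff G (i - j) else 0)"
    using sylvester_index_mat[OF i] i unfolding m_def n_def by (simp add: sylvester_index_mat)
  show ?thesis
  proof (cases "i < n")
    case True
    have "(\<Sum>j\<in>{0..<m+n}. sylvester_mat F G $$ (i,j) * z ^ (m+n-1-j))
        = (\<Sum>j\<in>{i..i+m}. coeff F (m+i-j) * z ^ (m+n-1-j))"
      by (rule sum.mono_neutral_cong_right) (use True in \<open>auto simp: idx\<close>)
    also have "\<dots> = (\<Sum>k\<in>{0..m}. coeff F k * z ^ (n - 1 - i + k))"
      by (rule sum.reindex_bij_witness[of _ "\<lambda>k. m+i-k" "\<lambda>j. m+i-j"]) (use True in \<open>auto simp: add.commute\<close>)
    also have "\<dots> = z ^ (n - 1 - i) * (\<Sum>k\<le>m. coeff F k * z ^ k)"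
      by (simp add: sum_distrib_left power_add atLeast0AtMost algebra_simps)
    also have "\<dots> = z ^ (n - 1 - i) * poly F z" by (simp add: poly_altdef m_def)
    finally show ?thesis using True m_def n_def by simp
  next
    case False
    have "(\<Sum>j\<in>{0..<m+n}. sylvester_mat F G $$ (i,j) * z ^ (m+n-1-j))
        = (\<Sum>j\<in>{i-n..i}. coeff G (i-j) * z ^ (m+n-1-j))"
      by (rule sum.mono_neutral_cong_right) (use False i' in \<open>auto simp: idx\<close>)
    also have "\<dots> = (\<Sum>k\<in>{0..n}. coeff G k * z ^ (m + n - 1 - i + k))"
      by (rule sum.reindex_bij_witness[of _ "\<lambda>k. i-k" "\<lambda>j. i-j"]) (use False i' in \<open>auto simp: add.commute\<close>)
    also have "\<dots> = z ^ (m + n - 1 - i) * (\<Sum>k\<le>n. coeff G k * z ^ k)"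
      by (simp add: sum_distrib_left power_add atLeast0AtMost algebra_simps)
    also have "\<dots> = z ^ (m + n - 1 - i) * poly G z" by (simp add: poly_altdef n_def)
    finally show ?thesis using False m_def n_def by simp
  qed
qed



lemma det_replace_col_smult:
  fixes M :: "'a::comm_ring_1 mat"
  assumes M: "M \<in> carrier_mat n n" and k: "k < n"
  shows "det (replace_col M (vec n (\<lambda>i. c * u i)) k) = c * det (replace_col M (vec n u) k)"
proof -
  define M' where "M' = replace_col M (vec n u) k"
  have M': "M' \<in> carrier_mat n n" using M by (auto simp: M'_def replace_col_def)
  define x where "x = vec n (\<lambda>j. if j = k then c else (0::'a))"
  have x: "x \<in> carrier_vec n" by (simp add: x_def)
  have "M' *\<^sub>v x = vec n (\<lambda>i. c * u i)"
  proof (rule eq_vecI)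
    fix i assume "i < dim_vec (vec n (\<lambda>i. c * u i))"
    then have i: "i < n" by simp
    have "(M' *\<^sub>v x) $ i = (\<Sum>j\<in>{0..<n}. M' $$ (i,j) * x $ j)"
      using M' i x by (simp add: scalar_prod_def)
    also have "\<dots> = (\<Sum>j\<in>{0..<n}. if j = k then u i * c else 0)"
      by (rule sum.cong) (use i M in \<open>auto simp: x_def M'_def replace_col_def\<close>)
    also have "\<dots> = c * u i" using k by simp
    finally show "(M' *\<^sub>v x) $ i = vec n (\<lambda>i. c * u i) $ i" using i by simp
  qed (use M' in simp)
  then have "det (replace_col M' (vec n (\<lambda>i. c * u i)) k) = x $ k * det M'"
    using cramer_lemma_mat[OF M' x k] by simp
  moreover have "replace_col M' (vec n (\<lambda>i. c * u i)) k = replace_col M (vec n (\<lambda>i. c * u i)) k"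
    by (rule eq_matI) (auto simp: M'_def replace_col_def)
  ultimately show ?thesis using k by (simp add: x_def M'_def)
qed

context dval begin

lemma det_A:
  assumes M: "M \<in> carrier_mat n n" and e: "\<And>i j. i < n \<Longrightarrow> j < n \<Longrightarrow> M $$ (i,j) \<in> A"
  shows "det M \<in> A"
  unfolding det_def'[OF M]
  by (intro A_sum A_mult A_of_int A_prod) (use e in \<open>auto simp: permutes_def\<close>)

lemma prod_cong_v:
  assumes "\<And>i. i \<in> I \<Longrightarrow> x i \<in> A" "\<And>i. i \<in> I \<Longrightarrow> y i \<in> A"
    "\<And>i. i \<in> I \<Longrightarrow> vge v (x i - y i) m"
  shows "vge v (prod x I - prod y I) m"
  using assms
proof (induction I rule: infinite_finite_induct)
  case (insert a I)
  have eq: "prod x (insert a I) - prod y (insert a I) =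
     x a * (prod x I - prod y I) + (x a - y a) * prod y I"
    using insert.hyps by (simp add: algebra_simps)
  show ?case unfolding eq
    by (intro vge_add vge_multA' vge_multA insert.IH A_prod) (use insert.prems in auto)
qed auto

lemma det_cong:
  assumes M: "M \<in> carrier_mat n n" and M': "M' \<in> carrier_mat n n"
    and e: "\<And>i j. i < n \<Longrightarrow> j < n \<Longrightarrow> M $$ (i,j) \<in> A"
    and e': "\<And>i j. i < n \<Longrightarrow> j < n \<Longrightarrow> M' $$ (i,j) \<in> A"
    and d: "\<And>i j. i < n \<Longrightarrow> j < n \<Longrightarrow> vge v (M $$ (i,j) - M' $$ (i,j)) m"
  shows "vge v (det M - det M') m"
proof -
  have "det M - det M' = (\<Sum>p \<in> {p. p permutes {0 ..< n}}.
     signof p * ((\<Prod> i = 0 ..< n. M $$ (i, p i)) - (\<Prod> i = 0 ..< n. M' $$ (i, p i))))"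
    unfolding det_def'[OF M] det_def'[OF M'] by (simp add: sum_subtractf right_diff_distrib)
  also have "vge v \<dots> m"
    by (intro vge_sum vge_multA' A_of_int prod_cong_v) (use e e' d in \<open>auto simp: permutes_def\<close>)
  finally show ?thesis .
qed

lemma sylv_A:
  assumes "polyA F" "polyA G" "i < degree F + degree G" "j < degree F + degree G"
  shows "sylvester_mat F G $$ (i,j) \<in> A"
  using assms unfolding polyA_def by (simp add: sylvester_index_mat)

lemma divdiff_A:
  assumes "a \<in> A" "b \<in> A" "a \<noteq> b"
  shows "(b ^ k - a ^ k) / (b - a) \<in> A"
proof (cases k)
  case 0 then show ?thesis by simp
next
  case (Suc k')
  have "b ^ k - a ^ k = (b - a) * (\<Sum>p<Suc k'. (b ^ p) * a ^ (k' - p))"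
    unfolding Suc by (rule diff_power_eq_sum)
  then have "(b ^ k - a ^ k) / (b - a) = (\<Sum>p<Suc k'. (b ^ p) * a ^ (k' - p))"
    using assms by simp
  moreover have "(\<Sum>p<Suc k'. (b ^ p) * a ^ (k' - p)) \<in> A"
    by (intro A_sum A_mult A_pow) (use assms in auto)
  ultimately show ?thesis by simp
qed

lemma res_one_root:
  assumes F: "polyA F" and G: "polyA G" and Fa: "poly F a = 0" and a: "a \<in> A"
    and deg: "degree F + degree G \<ge> 1"
  shows "\<exists>t\<in>A. resultant F G = poly G a * t"
proof -
  define n where "n = degree G"
  define N where "N = degree F + degree G"
  define L where "L = N - 1"
  define S where "S = sylvester_mat F G"
  have S: "S \<in> carrier_mat N N" unfolding S_def N_def by (rule sylvester_carrier_mat)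
  have L: "L < N" using deg by (simp add: L_def N_def)
  define x where "x = vec N (\<lambda>j. a ^ (L - j))"
  have x: "x \<in> carrier_vec N" by (simp add: x_def)
  define ua where "ua = (\<lambda>i. if i < n then 0 else a ^ (L - i))"
  have Sx: "S *\<^sub>v x = vec N (\<lambda>i. poly G a * ua i)"
  proof (rule eq_vecI)
    fix i assume "i < dim_vec (vec N (\<lambda>i. poly G a * ua i))"
    then have i: "i < N" by simp
    have "(S *\<^sub>v x) $ i = (\<Sum>j\<in>{0..<N}. S $$ (i,j) * a ^ (L - j))"
      using S i x by (simp add: scalar_prod_def x_def)
    also have "\<dots> = poly G a * ua i"
      using sylv_row_sum[of i F G a] i Fa unfolding S_def N_def L_def ua_def n_def by simp
    finally show "(S *\<^sub>v x) $ i = vec N (\<lambda>i. poly G a * ua i) $ i" using i by simp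
  qed (use S in simp)
  have "det S = det (replace_col S (vec N (\<lambda>i. poly G a * ua i)) L)"
    using cramer_lemma_mat[OF S x L] L unfolding Sx by (simp add: x_def)
  also have "\<dots> = poly G a * det (replace_col S (vec N ua) L)"
    by (rule det_replace_col_smult[OF S L])
  finally have eq: "resultant F G = poly G a * det (replace_col S (vec N ua) L)"
    by (simp add: resultant_def S_def)
  have "det (replace_col S (vec N ua) L) \<in> A"
    by (rule det_A[of _ N]) (use S F G a in \<open>auto simp: replace_col_def ua_def A_pow S_def N_def intro: sylv_A\<close>)
  with eq show ?thesis by blast
qed

lemma res_two_roots:
  assumes F: "polyA F" and G: "polyA G" and Fa: "poly F a = 0" and Fb: "poly F b = 0"
    and a: "a \<in> A" and b: "b \<in> A" and ab: "a \<noteq> b" and Ga: "poly G a \<noteq> 0"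
    and deg: "degree F \<ge> 2"
  shows "\<exists>t\<in>A. resultant F G = poly G a * poly G b * t"
proof -
  define n where "n = degree G"
  define N where "N = degree F + degree G"
  define L where "L = N - 1"
  define S where "S = sylvester_mat F G"
  have S: "S \<in> carrier_mat N N" unfolding S_def N_def by (rule sylvester_carrier_mat)
  have L: "L < N" "L - 1 < N" "L - 1 \<noteq> L" "L - (L - 1) = 1" using deg by (auto simp: L_def N_def)
  have ba: "b - a \<noteq> 0" using ab by simp
  define x where "x = vec N (\<lambda>j. a ^ (L - j))"
  have x: "x \<in> carrier_vec N" by (simp add: x_def)
  define ua where "ua = (\<lambda>i. if i < n then 0 else a ^ (L - i))"
  have Sx: "S *\<^sub>v x = vec N (\<lambda>i. poly G a * ua i)"
  proof (rule eq_vecI)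
    fix i assume "i < dim_vec (vec N (\<lambda>i. poly G a * ua i))"
    then have i: "i < N" by simp
    have "(S *\<^sub>v x) $ i = (\<Sum>j\<in>{0..<N}. S $$ (i,j) * a ^ (L - j))"
      using S i x by (simp add: scalar_prod_def x_def)
    also have "\<dots> = poly G a * ua i"
      using sylv_row_sum[of i F G a] i Fa unfolding S_def N_def L_def ua_def n_def by simp
    finally show "(S *\<^sub>v x) $ i = vec N (\<lambda>i. poly G a * ua i) $ i" using i by simp
  qed (use S in simp)
  define S1 where "S1 = replace_col S (vec N (\<lambda>i. poly G a * ua i)) L"
  have S1: "S1 \<in> carrier_mat N N" using S by (simp add: S1_def replace_col_def)
  have d1: "det S = det S1"
    using cramer_lemma_mat[OF S x L(1)] L unfolding Sx S1_def by (simp add: x_def)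
  define \<mu> where "\<mu> = (poly G a - poly G b) / ((b - a) * poly G a)"
  define d where "d = (\<lambda>j. (b ^ (L - j) - a ^ (L - j)) / (b - a))"
  define x2 where "x2 = vec N (\<lambda>j. if j = L then \<mu> else d j)"
  have x2: "x2 \<in> carrier_vec N" by (simp add: x2_def)
  define y where "y = (\<lambda>i. if i < n then 0 else (b ^ (L - i) - a ^ (L - i)) / (b - a))"
  have S1x: "S1 *\<^sub>v x2 = vec N (\<lambda>i. poly G b * y i)"
  proof (rule eq_vecI)
    fix i assume "i < dim_vec (vec N (\<lambda>i. poly G b * y i))"
    then have i: "i < N" by simp
    have "(S1 *\<^sub>v x2) $ i = (\<Sum>j\<in>{0..<N}. S1 $$ (i,j) * x2 $ j)"
      using S1 i x2 by (simp add: scalar_prod_def)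
    also have "\<dots> = (\<Sum>j\<in>{0..<N}. S $$ (i,j) * d j + (if j = L then poly G a * ua i * \<mu> else 0))"
      by (rule sum.cong) (use i S L in \<open>auto simp: S1_def x2_def replace_col_def d_def\<close>)
    also have "\<dots> = (\<Sum>j\<in>{0..<N}. S $$ (i,j) * d j) + poly G a * ua i * \<mu>"
      using L by (simp add: sum.distrib)
    also have "(\<Sum>j\<in>{0..<N}. S $$ (i,j) * d j) =
       ((\<Sum>j\<in>{0..<N}. S $$ (i,j) * b ^ (L - j)) - (\<Sum>j\<in>{0..<N}. S $$ (i,j) * a ^ (L - j))) / (b - a)"
      by (simp add: d_def sum_subtractf[symmetric] sum_divide_distrib[symmetric] right_diff_distrib)
    also have "(\<Sum>j\<in>{0..<N}. S $$ (i,j) * b ^ (L - j)) = (if i < n then 0 else b ^ (L - i) * poly G b)"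
      using sylv_row_sum[of i F G b] i Fb unfolding S_def N_def L_def n_def by simp
    also have "(\<Sum>j\<in>{0..<N}. S $$ (i,j) * a ^ (L - j)) = (if i < n then 0 else a ^ (L - i) * poly G a)"
      using sylv_row_sum[of i F G a] i Fa unfolding S_def N_def L_def n_def by simp
    finally have "(S1 *\<^sub>v x2) $ i = ((if i < n then 0 else b ^ (L - i) * poly G b) -
       (if i < n then 0 else a ^ (L - i) * poly G a)) / (b - a) + poly G a * ua i * \<mu>" .
    also have "\<dots> = poly G b * y i"
    proof (cases "i < n")
      case True then show ?thesis by (simp add: ua_def y_def)
    next
      case False
      have gm: "poly G a * \<mu> = (poly G a - poly G b) / (b - a)" using Ga ba by (simp add: \<mu>_def)
      have "(b ^ (L - i) * poly G b - a ^ (L - i) * poly G a) / (b - a) + poly G a * a ^ (L - i) * \<mu>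
        = (b ^ (L - i) * poly G b - a ^ (L - i) * poly G a) / (b - a) + a ^ (L - i) * (poly G a * \<mu>)"
        by (simp add: ac_simps)
      also have "\<dots> = (b ^ (L - i) * poly G b - a ^ (L - i) * poly G a + a ^ (L - i) * (poly G a - poly G b)) / (b - a)"
        unfolding gm by (simp add: add_divide_distrib)
      also have "\<dots> = poly G b * ((b ^ (L - i) - a ^ (L - i)) / (b - a))"
        by (simp add: algebra_simps)
      finally show ?thesis using False by (simp add: ua_def y_def)
    qed
    finally show "(S1 *\<^sub>v x2) $ i = vec N (\<lambda>i. poly G b * y i) $ i" using i by simp
  qed (use S1 in simp)
  have x2L: "x2 $ (L - 1) = 1" using L ba by (simp add: x2_def d_def)
  have "det S1 = det (replace_col S1 (vec N (\<lambda>i. poly G b * y i)) (L - 1))"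
    using cramer_lemma_mat[OF S1 x2 L(2)] x2L unfolding S1x by simp
  also have "\<dots> = poly G b * det (replace_col S1 (vec N y) (L - 1))"
    by (rule det_replace_col_smult[OF S1 L(2)])
  also have "replace_col S1 (vec N y) (L - 1) =
      replace_col (replace_col S (vec N y) (L - 1)) (vec N (\<lambda>i. poly G a * ua i)) L"
    by (rule eq_matI) (use L in \<open>auto simp: S1_def replace_col_def\<close>)
  also have "det \<dots> = poly G a * det (replace_col (replace_col S (vec N y) (L - 1)) (vec N ua) L)"
    by (rule det_replace_col_smult) (use S L in \<open>auto simp: replace_col_def\<close>)
  finally have eq: "resultant F G = poly G a * poly G b *
      det (replace_col (replace_col S (vec N y) (L - 1)) (vec N ua) L)"
    using d1 by (simp add: resultant_def S_def)
  have "det (replace_col (replace_col S (vec N y) (L - 1)) (vec N ua) L) \<in> A"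
    by (rule det_A[of _ N]) (use S F G a b ab in \<open>auto simp: replace_col_def ua_def y_def A_pow divdiff_A S_def N_def intro: sylv_A\<close>)
  with eq show ?thesis by blast
qed

end


context dval begin

lemma res_cong:
  assumes F: "polyA F" and F': "polyA F'" and G: "polyA G" and G': "polyA G'"
    and dF: "degree F = degree F'" and dG: "degree G = degree G'"
    and cF: "\<And>i. vge v (coeff F i - coeff F' i) m" and cG: "\<And>i. vge v (coeff G i - coeff G' i) m"
  shows "vge v (resultant F G - resultant F' G') m"
proof -
  define n where "n = degree F + degree G"
  have "vge v (det (sylvester_mat F G) - det (sylvester_mat F' G')) m"
  proof (rule det_cong[of _ n])
    show "sylvester_mat F G \<in> carrier_mat n n" unfolding n_def by (rule sylvester_carrier_mat)
    show "sylvester_mat F' G' \<in> carrier_mat n n" unfolding n_def dF dG by (rule sylvester_carrier_mat)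
    fix i j assume ij: "i < n" "j < n"
    show "sylvester_mat F G $$ (i, j) \<in> A" using sylv_A[OF F G] ij n_def by simp
    show "sylvester_mat F' G' $$ (i, j) \<in> A" using sylv_A[OF F' G'] ij n_def dF dG by simp
    show "vge v (sylvester_mat F G $$ (i, j) - sylvester_mat F' G' $$ (i, j)) m"
      using ij cF cG unfolding n_def
      by (simp add: sylvester_index_mat dF[symmetric] dG[symmetric])
  qed
  then show ?thesis by (simp add: resultant_def)
qed

end

locale rootcount = dval +
  fixes f :: "'a poly" and N :: nat
  assumes fA: "polyA f" and monic: "lead_coeff f = 1"
    and disc: "resultant f (pderiv f) \<noteq> 0"
    and Nbig: "int N > 2 * v (resultant f (pderiv f))"
begin

abbreviation "\<Delta> \<equiv> resultant f (pderiv f)"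
abbreviation "R \<equiv> v \<Delta>"

definition "inS a \<longleftrightarrow> a \<in> A \<and> vge v (poly f a) (int N)"

lemma f'A: "polyA (pderiv f)" using pderiv_A[OF fA] .

lemma R_nonneg: "R \<ge> 0"
proof -
  have "\<Delta> \<in> A" unfolding resultant_def
    by (rule det_A[of _ "degree f + degree (pderiv f)"])
       (auto intro: sylv_A fA f'A sylvester_carrier_mat)
  then show ?thesis using A_nonneg disc by auto
qed

lemma N_pos: "int N > R" using Nbig R_nonneg by simp

lemma deg_pos: assumes "inS a" shows "degree f \<ge> 1"
proof (rule ccontr)
  assume "\<not> degree f \<ge> 1"
  then have "degree f = 0" by simp
  then have "f = 1" using monic by (metis lead_coeff_1 monic_degree_0)
  then have "vge v 1 (int N)" using assms unfolding inS_def by simp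
  then show False using v1 N_pos R_nonneg unfolding vge_def by simp
qed

lemma single:
  assumes a: "inS a"
  shows "poly (pderiv f) a \<noteq> 0 \<and> v (poly (pderiv f) a) \<le> R"
proof -
  have aA: "a \<in> A" and fa: "vge v (poly f a) (int N)" using a by (auto simp: inS_def)
  have faA: "poly f a \<in> A" using poly_A[OF fA aA] .
  define F where "F = f - [:poly f a:]"
  have FA: "polyA F" unfolding F_def using fA faA
    by (intro polyA_diff) (auto simp: polyA_def coeff_pCons split: nat.splits)
  have Fa: "poly F a = 0" by (simp add: F_def)
  have dF: "degree F = degree f"
  proof -
    have "F = f + [:- poly f a:]" by (simp add: F_def)
    moreover have "degree [:- poly f a:] < degree f" using deg_pos[OF a] by simp
    ultimately show ?thesis by (simp add: degree_add_eq_left)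
  qed
  have pF: "pderiv F = pderiv f" by (simp add: F_def pderiv_diff pderiv_pCons)
  obtain t where t: "t \<in> A" "resultant F (pderiv f) = poly (pderiv f) a * t"
    using res_one_root[OF FA f'A Fa aA] deg_pos[OF a] dF by auto
  have "vge v (resultant F (pderiv f) - \<Delta>) (int N)"
  proof (rule res_cong[OF FA fA f'A f'A dF refl])
    fix i show "vge v (coeff F i - coeff f i) (int N)"
      using fa by (cases i) (auto simp: F_def intro: vge_uminus)
  qed simp
  from v_perturb[OF disc N_pos this]
  have "resultant F (pderiv f) \<noteq> 0" "v (resultant F (pderiv f)) = R" by auto
  with t have nz: "poly (pderiv f) a \<noteq> 0" "t \<noteq> 0"
    and "R = v (poly (pderiv f) a) + v t" using vmult by auto
  moreover have "v t \<ge> 0" using A_nonneg t nz by auto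
  ultimately show ?thesis by simp
qed

end


context rootcount begin

abbreviation "e x \<equiv> v (poly (pderiv f) x)"

lemma vA_diff_nonneg: "a \<in> A \<Longrightarrow> c \<in> A \<Longrightarrow> a \<noteq> c \<Longrightarrow> v (a - c) \<ge> 0"
  using A_nonneg A_diff by auto

lemma pair:
  assumes a: "inS a" and c: "inS c" and ac: "a \<noteq> c" and k: "v (a - c) \<le> e a"
    and deg: "degree f \<ge> 2"
  shows "e a + e c \<le> R"
proof -
  have aA: "a \<in> A" and fa: "vge v (poly f a) (int N)" using a by (auto simp: inS_def)
  have cA: "c \<in> A" and fc: "vge v (poly f c) (int N)" using c by (auto simp: inS_def)
  note sa = single[OF a] and sc = single[OF c]
  define k where "k = v (a - c)"
  have ac0: "a - c \<noteq> 0" using ac by simp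
  have k0: "k \<ge> 0" using vA_diff_nonneg[OF aA cA ac] k_def by simp
  have kR: "k \<le> R" using k sa k_def by simp
  define m where "m = int N - k"
  have mR: "m > R" using kR Nbig m_def by simp
  define s where "s = (poly f a - poly f c) / (a - c)"
  have sac: "s * (a - c) = poly f a - poly f c" using ac0 by (simp add: s_def)
  have vs: "vge v s m"
  proof (cases "poly f a - poly f c = 0")
    case True then show ?thesis by (simp add: s_def)
  next
    case False
    have d: "vge v (poly f a - poly f c) (int N)" using vge_diff[OF fa fc] .
    have "v s = v (poly f a - poly f c) - k" unfolding s_def k_def using vdiv[OF False ac0] .
    moreover have "s \<noteq> 0" using False ac0 by (simp add: s_def)
    ultimately show ?thesis using d False unfolding vge_def m_def by auto
  qed
  have sA: "s \<in> A" using vge_mono[OF vs, of 0] mR R_nonneg unfolding val_ring_def by simp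
  define c0 where "c0 = poly f a - a * s"
  have vc0: "vge v c0 m" unfolding c0_def
    by (intro vge_diff vge_multA') (use vge_mono[OF fa, of m] m_def k0 vs aA in auto)
  have c0A: "c0 \<in> A" using vge_mono[OF vc0, of 0] mR R_nonneg unfolding val_ring_def by simp
  define F where "F = f - [:c0, s:]"
  have FA: "polyA F" unfolding F_def using fA c0A sA
    by (intro polyA_diff) (auto simp: polyA_def coeff_pCons split: nat.splits)
  have Fa: "poly F a = 0" by (simp add: F_def c0_def algebra_simps)
  have Fc: "poly F c = 0"
  proof -
    have "poly F c = poly f c - c0 - c * s" by (simp add: F_def algebra_simps)
    also have "\<dots> = poly f c - poly f a + s * (a - c)" by (simp add: c0_def algebra_simps)
    finally show ?thesis using sac by simp
  qed
  have dF: "degree F = degree f"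
  proof -
    have "F = f + (- [:c0, s:])" by (simp add: F_def)
    moreover have "degree (- [:c0, s:]) < degree f" using deg by simp
    ultimately show ?thesis by (simp add: degree_add_eq_left)
  qed
  have pF: "pderiv F = pderiv f - [:s:]" by (simp add: F_def pderiv_diff pderiv_pCons)
  have dpF: "degree (pderiv F) = degree (pderiv f)"
  proof (cases "degree (pderiv f) = 0")
    case True
    have "degree (pderiv F) \<le> max (degree (pderiv f)) (degree [:s:])"
      unfolding pF by (rule degree_diff_le_max)
    then show ?thesis using True by simp
  next
    case False
    have "pderiv F = pderiv f + [:- s:]" by (simp add: pF)
    moreover have "degree [:- s:] < degree (pderiv f)" using False by simp
    ultimately show ?thesis by (simp add: degree_add_eq_left)
  qed
  have pFA: "polyA (pderiv F)" using pderiv_A[OF FA] .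
  have "vge v (resultant F (pderiv F) - \<Delta>) m"
  proof (rule res_cong[OF FA fA pFA f'A dF dpF])
    fix i show "vge v (coeff F i - coeff f i) m"
    proof (cases i)
      case (Suc j) then show ?thesis using vs by (cases j) (auto simp: F_def intro: vge_uminus)
    qed (use vc0 in \<open>auto simp: F_def intro: vge_uminus\<close>)
    show "vge v (coeff (pderiv F) i - coeff (pderiv f) i) m"
      using vs by (cases i) (auto simp: pF intro: vge_uminus)
  qed
  from v_perturb[OF disc mR this]
  have r1: "resultant F (pderiv F) \<noteq> 0" "v (resultant F (pderiv F)) = R" by auto
  have ga: "poly (pderiv F) a \<noteq> 0 \<and> v (poly (pderiv F) a) = e a"
    by (rule v_perturb) (use sa mR vs in \<open>auto simp: pF intro: vge_uminus\<close>)
  have gc: "poly (pderiv F) c \<noteq> 0 \<and> v (poly (pderiv F) c) = e c"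
    by (rule v_perturb) (use sc mR vs in \<open>auto simp: pF intro: vge_uminus\<close>)
  obtain t where t: "t \<in> A" "resultant F (pderiv F) = poly (pderiv F) a * poly (pderiv F) c * t"
    using res_two_roots[OF FA pFA Fa Fc aA cA ac] ga deg dF by auto
  have t0: "t \<noteq> 0" using t r1 by auto
  have "R = e a + e c + v t" using r1 t ga gc t0 by (simp add: vmult)
  moreover have "v t \<ge> 0" using A_nonneg t t0 by auto
  ultimately show ?thesis by simp
qed

lemma dichotomy:
  assumes a: "inS a" and c: "inS c" and ac: "a \<noteq> c"
  shows "v (a - c) \<le> e c \<or> v (a - c) \<ge> int N - e c"
proof (rule ccontr)
  assume H: "\<not> ?thesis"
  have aA: "a \<in> A" and fa: "vge v (poly f a) (int N)" using a by (auto simp: inS_def)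
  have cA: "c \<in> A" and fc: "vge v (poly f c) (int N)" using c by (auto simp: inS_def)
  define t where "t = a - c"
  have t0: "t \<noteq> 0" using ac by (simp add: t_def)
  have tA: "t \<in> A" using A_diff aA cA by (simp add: t_def)
  obtain H where HA: "H \<in> A" and Ht: "poly f (c + t) = poly f c + t * poly (pderiv f) c + t^2 * H"
    using taylor[OF fA cA tA] by auto
  have eq: "t * poly (pderiv f) c = (poly f a - poly f c) - t^2 * H"
    using Ht by (simp add: t_def)
  have pc: "poly (pderiv f) c \<noteq> 0" using single[OF c] by simp
  define k where "k = v t"
  have kk: "k > e c" "k < int N - e c" using H by (auto simp: k_def t_def)
  have v1: "v (t * poly (pderiv f) c) = k + e c" using vmult[OF t0 pc] by (simp add: k_def)
  have "vge v (t^2 * H) (2 * k)"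
  proof -
    have "vge v (t^2) (2 * k)" using vpow[OF t0, of 2] t0 unfolding vge_def k_def by simp
    then show ?thesis using vge_multA HA by blast
  qed
  then have "vge v (t^2 * H) (k + e c + 1)" by (rule vge_mono) (use kk in auto)
  moreover have "vge v (poly f a - poly f c) (k + e c + 1)"
    by (rule vge_mono[OF vge_diff[OF fa fc]]) (use kk in auto)
  ultimately have "vge v (t * poly (pderiv f) c) (k + e c + 1)" unfolding eq using vge_diff by blast
  then show False using v1 t0 pc unfolding vge_def by simp
qed

lemma deg1_e:
  assumes "degree f = 1" shows "e x = 0"
proof -
  have "pderiv f = 1"
  proof (rule poly_eqI)
    fix i show "coeff (pderiv f) i = coeff 1 i"
    proof (cases i)
      case 0 then show ?thesis using monic assms by (simp add: coeff_pderiv)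
    next
      case (Suc j) then show ?thesis using assms by (simp add: coeff_pderiv coeff_eq_0)
    qed
  qed
  then show ?thesis using v1 by simp
qed

lemma close:
  assumes a: "inS a" and c: "inS c" and near: "vge v (a - c) (int (nat R div 2) + 1)"
  shows "vge v (a - c) (int N - R)"
proof (cases "a = c")
  case True then show ?thesis by simp
next
  case ac: False
  define k where "k = v (a - c)"
  have ac0: "a - c \<noteq> 0" using ac by simp
  have kh: "k \<ge> int (nat R div 2) + 1" using near ac0 unfolding vge_def k_def by blast
  have h2: "2 * (int (nat R div 2) + 1) > R"
  proof -
    have "2 * (nat R div 2) + 2 > nat R" by linarith
    then have "int (2 * (nat R div 2) + 2) > int (nat R)" by linarith
    then show ?thesis using R_nonneg by simp
  qed
  have sa: "e a \<le> R" using single[OF a] by blast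
  have sc: "e c \<le> R" using single[OF c] by blast
  have ca: "c \<noteq> a" using ac by simp
  have "v (- (a - c)) = v (a - c)" by (rule vuminus[OF ac0])
  then have vca: "v (c - a) = k" unfolding k_def by simp
  show ?thesis
  proof (cases "k \<ge> int N - e c")
    case True
    then have "k \<ge> int N - R" using sc by linarith
    then show ?thesis unfolding vge_def k_def by blast
  next
    case False
    have "v (a - c) \<le> e c \<or> v (a - c) \<ge> int N - e c" by (rule dichotomy[OF a c ac])
    then have kc: "k \<le> e c" using False unfolding k_def by linarith
    have "v (c - a) \<le> e a \<or> v (c - a) \<ge> int N - e a" by (rule dichotomy[OF c a ca])
    then have ka: "k \<le> e a" using vca sa kc sc Nbig by linarith
    show ?thesis
    proof (cases "degree f \<ge> 2")
      case True
      have "v (a - c) \<le> e a" using ka k_def by simp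
      then have "e a + e c \<le> R" using pair[OF a c ac _ True] by blast
      then show ?thesis using ka kc kh h2 by linarith
    next
      case False
      then have "degree f = 1" using deg_pos[OF a] by simp
      then have "e a = 0" by (rule deg1_e)
      then show ?thesis using ka kh by linarith
    qed
  qed
qed

end


context dval begin

definition "rep C = (SOME y. y \<in> C)"
definition "dig c k = (\<Sum>i<k. rep (c i) * \<pi> ^ i)"

lemma equiv_RN: "equiv A (cong_rel v \<pi> n)"
proof (rule equivI)
  show "cong_rel v \<pi> n \<subseteq> A \<times> A" by (auto simp: cong_rel_def)
  show "refl_on A (cong_rel v \<pi> n)"
    by (rule refl_onI) (auto simp: cong_rel_def intro: bexI[of _ 0])
  show "sym (cong_rel v \<pi> n)"
  proof (rule symI)
    fix x y assume "(x, y) \<in> cong_rel v \<pi> n"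
    then obtain t where "x \<in> A" "y \<in> A" "t \<in> A" "x - y = \<pi> ^ n * t" by (auto simp: cong_rel_def)
    then show "(y, x) \<in> cong_rel v \<pi> n" unfolding cong_rel_def
      by (auto intro!: bexI[of _ "- t"] A_uminus simp: algebra_simps)
  qed
  show "trans (cong_rel v \<pi> n)"
  proof (rule transI)
    fix x y z assume "(x, y) \<in> cong_rel v \<pi> n" "(y, z) \<in> cong_rel v \<pi> n"
    then obtain t s where "x \<in> A" "y \<in> A" "z \<in> A" "t \<in> A" "s \<in> A" "x - y = \<pi> ^ n * t" "y - z = \<pi> ^ n * s"
      by (auto simp: cong_rel_def)
    then show "(x, z) \<in> cong_rel v \<pi> n" unfolding cong_rel_def
      by (auto intro!: bexI[of _ "t + s"] A_add simp: algebra_simps)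
  qed
qed

lemma cong_rel_iff: "(x, y) \<in> cong_rel v \<pi> n \<longleftrightarrow> x \<in> A \<and> y \<in> A \<and> vge v (x - y) (int n)"
  unfolding cong_rel_def using pi_pow_iff by auto

lemma rep_props:
  assumes y: "y \<in> A"
  shows "cong_rel v \<pi> 1 `` {y} \<in> quot_ring v \<pi> 1"
    and "rep (cong_rel v \<pi> 1 `` {y}) \<in> A"
    and "vge v (y - rep (cong_rel v \<pi> 1 `` {y})) 1"
proof -
  show "cong_rel v \<pi> 1 `` {y} \<in> quot_ring v \<pi> 1"
    unfolding quot_ring_def using y by (rule quotientI)
  have "y \<in> cong_rel v \<pi> 1 `` {y}" using y by (simp add: cong_rel_iff)
  then have "rep (cong_rel v \<pi> 1 `` {y}) \<in> cong_rel v \<pi> 1 `` {y}"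
    unfolding rep_def by (rule someI)
  then show "rep (cong_rel v \<pi> 1 `` {y}) \<in> A" "vge v (y - rep (cong_rel v \<pi> 1 `` {y})) 1"
    by (auto simp: cong_rel_iff)
qed

lemma rep_A: assumes "C \<in> quot_ring v \<pi> 1" shows "rep C \<in> A"
proof -
  from assms obtain x where "x \<in> A" "C = cong_rel v \<pi> 1 `` {x}"
    unfolding quot_ring_def by (rule quotientE)
  then show ?thesis using rep_props(2)[of x] by simp
qed

lemma dig_A: "c \<in> PiE I (\<lambda>_. quot_ring v \<pi> 1) \<Longrightarrow> {..<k} \<subseteq> I \<Longrightarrow> dig c k \<in> A"
  unfolding dig_def by (intro A_sum A_mult A_pow A_pi rep_A) (auto simp: PiE_iff)

lemma digits:
  assumes "x \<in> A"
  shows "\<exists>c\<in>PiE {..<k} (\<lambda>_. quot_ring v \<pi> 1). vge v (x - dig c k) (int k)"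
proof (induction k)
  case 0
  show ?case using assms by (intro bexI[of _ "\<lambda>_. undefined"]) (auto simp: dig_def val_ring_def)
next
  case (Suc k)
  then obtain c where c: "c \<in> PiE {..<k} (\<lambda>_. quot_ring v \<pi> 1)" "vge v (x - dig c k) (int k)" by auto
  obtain y where y: "y \<in> A" "x - dig c k = \<pi> ^ k * y" using c(2) pi_pow_iff by blast
  define C where "C = cong_rel v \<pi> 1 `` {y}"
  note r = rep_props[OF y(1), folded C_def]
  define c' where "c' = c(k := C)"
  have c': "c' \<in> PiE {..<Suc k} (\<lambda>_. quot_ring v \<pi> 1)"
    using c(1) r(1) unfolding c'_def by (auto simp: PiE_iff extensional_def)
  have "dig c' (Suc k) = dig c k + rep C * \<pi> ^ k"
    unfolding dig_def c'_def by (simp add: lessThan_Suc)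
  then have "x - dig c' (Suc k) = \<pi> ^ k * (y - rep C)" using y(2) by (simp add: algebra_simps)
  moreover have "vge v (\<pi> ^ k * (y - rep C)) (int k + 1)"
    using vge_mult[OF _ r(3), of "\<pi> ^ k" "int k"] vpi_pow unfolding vge_def by auto
  ultimately show ?case using c' by (intro bexI[of _ c']) (auto simp: add.commute)
qed

end

context rootcount begin

definition "center h c = (SOME a. inS a \<and> vge v (a - dig c (Suc h)) (int (Suc h)))"

lemma count:
  assumes fin: "finite (quot_ring v \<pi> 1)"
  shows "card (roots_mod v \<pi> N f) \<le> card (quot_ring v \<pi> 1) ^ (nat R + nat R div 2 + 1)"
proof -
  define h where "h = nat R div 2"
  define r where "r = nat R"
  define Q where "Q = quot_ring v \<pi> 1"
  define D where "D = PiE {..<Suc h} (\<lambda>_. Q) \<times> PiE {..<r} (\<lambda>_. Q)"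
  define \<Phi> where "\<Phi> = (\<lambda>(c, d). cong_rel v \<pi> N `` {center h c + \<pi> ^ (N - r) * dig d r})"
  have rN: "int (N - r) = int N - R" using N_pos R_nonneg by (simp add: r_def)
  have sub: "roots_mod v \<pi> N f \<subseteq> \<Phi> ` D"
  proof
    fix Cl assume "Cl \<in> roots_mod v \<pi> N f"
    then obtain a b where Cl: "Cl \<in> quot_ring v \<pi> N" and aC: "a \<in> Cl" and b: "b \<in> A"
      and fab: "poly f a = \<pi> ^ N * b" unfolding roots_mod_def by auto
    from Cl obtain a0 where a0: "a0 \<in> A" "Cl = cong_rel v \<pi> N `` {a0}"
      unfolding quot_ring_def by (auto elim!: quotientE)
    have a0a: "(a0, a) \<in> cong_rel v \<pi> N" using aC a0 by simp
    then have aA: "a \<in> A" by (simp add: cong_rel_iff)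
    have Sa: "inS a" unfolding inS_def using aA fab b pi_pow_iff by blast
    obtain c where c: "c \<in> PiE {..<Suc h} (\<lambda>_. Q)" "vge v (a - dig c (Suc h)) (int (Suc h))"
      using digits[OF aA] unfolding Q_def by blast
    have "inS (center h c) \<and> vge v (center h c - dig c (Suc h)) (int (Suc h))"
      unfolding center_def by (rule someI[of _ a]) (use Sa c in auto)
    then have ac: "inS (center h c)" "vge v (center h c - dig c (Suc h)) (int (Suc h))" by auto
    have "vge v (a - center h c) (int (Suc h))"
      using vge_diff[OF c(2) ac(2)] by simp
    then have "vge v (a - center h c) (int N - R)"
      by (intro close[OF Sa ac(1)]) (simp add: h_def add.commute)
    then obtain w where w: "w \<in> A" "a - center h c = \<pi> ^ (N - r) * w"
      using pi_pow_iff rN by metis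
    obtain d where d: "d \<in> PiE {..<r} (\<lambda>_. Q)" "vge v (w - dig d r) (int r)"
      using digits[OF w(1)] unfolding Q_def by blast
    obtain z where z: "z \<in> A" "w - dig d r = \<pi> ^ r * z" using d(2) pi_pow_iff by blast
    have "a - (center h c + \<pi> ^ (N - r) * dig d r) = \<pi> ^ (N - r) * (w - dig d r)"
      using w(2) by (simp add: algebra_simps)
    also have "\<dots> = \<pi> ^ N * z" using z N_pos R_nonneg
      by (simp add: r_def mult.assoc[symmetric] power_add[symmetric])
    finally have eqz: "a - (center h c + \<pi> ^ (N - r) * dig d r) = \<pi> ^ N * z" .
    have cA: "center h c \<in> A" using ac(1) by (simp add: inS_def)
    have dA: "dig d r \<in> A" using dig_A[OF d(1)[unfolded Q_def]] by simp
    have yA: "center h c + \<pi> ^ (N - r) * dig d r \<in> A" using cA dA by (intro A_add A_mult A_pow A_pi)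
    have "(a, center h c + \<pi> ^ (N - r) * dig d r) \<in> cong_rel v \<pi> N"
      unfolding cong_rel_def using aA yA z eqz by auto
    then have "Cl = \<Phi> (c, d)"
      using equiv_class_eq[OF equiv_RN a0a] a0(2) equiv_class_eq[OF equiv_RN]
      unfolding \<Phi>_def by auto
    moreover have "(c, d) \<in> D" using c d by (simp add: D_def)
    ultimately show "Cl \<in> \<Phi> ` D" by blast
  qed
  have finD: "finite D" using fin by (simp add: D_def Q_def finite_PiE)
  have "card (roots_mod v \<pi> N f) \<le> card (\<Phi> ` D)"
    by (rule card_mono[OF finite_imageI[OF finD] sub])
  also have "\<dots> \<le> card D" by (rule card_image_le[OF finD])
  also have "card D = card Q ^ Suc h * card Q ^ r"
    by (simp add: D_def card_cartesian_product card_PiE)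
  also have "\<dots> = card Q ^ (r + h + 1)" by (simp add: power_add[symmetric] ac_simps)
  finally show ?thesis by (simp add: Q_def r_def h_def)
qed

end

theorem corollary3p12:
  fixes v :: "'a::field \<Rightarrow> int" and \<pi> :: 'a and q :: nat
    and f :: "'a poly" and N :: nat
  assumes dv: "discrete_valuation v"
    and complete: "v_complete v"
    and unif: "\<pi> \<noteq> 0" "v \<pi> = 1"
    and resfin: "finite (quot_ring v \<pi> 1)"
    and q_def: "card (quot_ring v \<pi> 1) = q"
    and coeffs: "\<forall>i. coeff f i \<in> val_ring v"
    and monic: "lead_coeff f = 1"
    and disc: "resultant f (pderiv f) \<noteq> 0"
    and N: "int N > 2 * v (resultant f (pderiv f))"
  shows "card (roots_mod v \<pi> N f)
           \<le> q ^ (nat (v (resultant f (pderiv f)))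
                  + nat (v (resultant f (pderiv f))) div 2 + 1)"
proof -
  interpret dval v \<pi> by (unfold_locales) (use dv unif in auto)
  interpret rootcount v \<pi> f N
    by (unfold_locales) (use coeffs monic disc N in \<open>auto simp: polyA_def\<close>)
  show ?thesis using count[OF resfin] q_def by simp
qed


end
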